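(* Let $a,b,c\in\mathbb{R}$ with $b\neq 0$ and write $-a/b=2n+3$. Any linear Hopf sphere $\mathcal{S}$ satisfying $0=ar_1+br_2+c$ has astigmatism of the form $s=C_0\sin^{2n+2}\theta$ and support function of the form $$r=C_2\cos\theta+C_1+C_0\left[\frac{\sin^{2n+2}\theta}{2n+2}-\cos\theta\int_0^\theta\sin^{2n+1}\vartheta\,d\vartheta\right],$$ for constants $C_0,C_1,C_2$.
   Context: $\mathscr{W}$ is the set of embedded $C^2$-smooth topological 2-spheres in $\mathbb{R}^3$ that are rotationally symmetric and strictly convex. A surface in $\mathscr{W}$ is parametrised by the inverse Gauss map with $\theta\in[0,\pi]$ the angle between the outward normal and the symmetry axis. The support function is $r(\theta)=\vec X\cdot\hat n$, the radii of curvature are $r_1=\frac{\cos^2\theta}{\sin\theta}\frac{d}{d\theta}\left(\frac{r}{\cos\theta}\right)$, $r_2=r''+r$, and the astigmatism is $s=r_2-r_1$. A linear Hopf sphere (for $a,b,c$) is a surface in $\mathscr{W}$ on which $ar_1+br_2+c=0$ holds identically. *)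

theory Defs
  imports "HOL-Analysis.Analysis"
begin

text \<open>A rotationally symmetric strictly convex sphere is described through its
support function r(theta), theta in [0,pi] the angle between the outward normal
and the symmetry axis.  As a function of theta the support function of a
C2 surface with positive curvature is C2 (on all of the real line, by evenness
and periodicity).\<close>

text \<open>Radius of curvature r1 = cos^2/sin * d/dtheta (r / cos), written in the
equivalent form r' cos/sin + r (this is what the paper's formula unfolds to, and
it is also meaningful at theta = pi/2, where r/cos is not defined).\<close>
definition radius1 :: "(real \<Rightarrow> real) \<Rightarrow> real \<Rightarrow> real" where
  "radius1 r \<theta> = deriv r \<theta> * cos \<theta> / sin \<theta> + r \<theta>"

definition radius2 :: "(real \<Rightarrow> real) \<Rightarrow> real \<Rightarrow> real" where
  "radius2 r \<theta> = deriv (deriv r) \<theta> + r \<theta>"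

definition astigmatism :: "(real \<Rightarrow> real) \<Rightarrow> real \<Rightarrow> real" where
  "astigmatism r \<theta> = radius2 r \<theta> - radius1 r \<theta>"

definition in_W :: "(real \<Rightarrow> real) \<Rightarrow> bool" where
  "in_W r \<longleftrightarrow>
     (\<forall>x. (r has_real_derivative deriv r x) (at x)) \<and>
     (\<forall>x. (deriv r has_real_derivative deriv (deriv r) x) (at x)) \<and>
     continuous_on UNIV (deriv (deriv r)) \<and>
     deriv r 0 = 0 \<and> deriv r pi = 0 \<and>
     (\<forall>\<theta>\<in>{0..pi}. radius2 r \<theta> > 0) \<and>
     (\<forall>\<theta>\<in>{0<..<pi}. radius1 r \<theta> > 0)"

definition linear_hopf_sphere :: "real \<Rightarrow> real \<Rightarrow> real \<Rightarrow> (real \<Rightarrow> real) \<Rightarrow> bool" where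
  "linear_hopf_sphere a b c r \<longleftrightarrow> in_W r \<and>
     (\<forall>\<theta>\<in>{0<..<pi}. a * radius1 r \<theta> + b * radius2 r \<theta> + c = 0)"

end

theory Submission
  imports Defs
begin

lemma quot_lim:
  fixes f g :: "real \<Rightarrow> real"
  assumes "(f has_real_derivative f') (at x)" "(g has_real_derivative g') (at x)"
    "f x = 0" "g x = 0" "g' \<noteq> 0"
  shows "((\<lambda>y. f y / g y) \<longlongrightarrow> f' / g') (at x)"
proof -
  have A: "((\<lambda>y. (f y - f x) / (y - x)) \<longlongrightarrow> f') (at x)"
    using assms(1) has_field_derivative_iff by blast
  have B: "((\<lambda>y. (g y - g x) / (y - x)) \<longlongrightarrow> g') (at x)"
    using assms(2) has_field_derivative_iff by blast
  have C: "((\<lambda>y. ((f y - f x) / (y - x)) / ((g y - g x) / (y - x))) \<longlongrightarrow> f' / g') (at x)"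
    by (rule tendsto_divide[OF A B assms(5)])
  have E: "\<forall>\<^sub>F y in at x. ((f y - f x) / (y - x)) / ((g y - g x) / (y - x)) = f y / g y"
    unfolding eventually_at_filter using assms(3,4) by (auto intro!: always_eventually)
  show ?thesis using Lim_transform_eventually[OF C E] .
qed

lemma dR1:
  fixes r u u2 :: "real \<Rightarrow> real"
  assumes hr: "\<And>x. (r has_real_derivative u x) (at x)"
    and hu: "\<And>x. (u has_real_derivative u2 x) (at x)" and sx: "sin x \<noteq> 0"
  shows "((\<lambda>y. u y * cos y / sin y + r y) has_real_derivative
      (cos x / sin x) * (u2 x - u x * cos x / sin x)) (at x)"
proof -
  have "((\<lambda>y. u y * cos y / sin y + r y) has_real_derivative
      ((u2 x * cos x + u x * (- sin x)) * sin x - u x * cos x * cos x) / (sin x * sin x) + u x) (at x)"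
    by (auto intro!: derivative_eq_intros hu hr simp: sx)
  moreover have "((u2 x * cos x + u x * (- sin x)) * sin x - u x * cos x * cos x) / (sin x * sin x) + u x
     = (cos x / sin x) * (u2 x - u x * cos x / sin x)"
  proof -
    have "cos x * cos x = 1 - sin x * sin x" using sin_squared_eq[of x] by (simp add: power2_eq_square)
    then show ?thesis using sx by (simp add: field_simps)
  qed
  ultimately show ?thesis by simp
qed

theorem proposition3p1:
  fixes a b c n :: real and r :: "real \<Rightarrow> real"
  assumes "b \<noteq> 0" and "- a / b = 2 * n + 3"
    and "linear_hopf_sphere a b c r"
  shows "\<exists>C0 C1 C2 :: real.
    (\<forall>\<theta>\<in>{0<..<pi}. astigmatism r \<theta> = C0 * sin \<theta> powr (2 * n + 2)) \<and>
    (\<forall>\<theta>\<in>{0..pi}. r \<theta> = C2 * cos \<theta> + C1 + C0 *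
        (sin \<theta> powr (2 * n + 2) / (2 * n + 2)
         - cos \<theta> * integral {0..\<theta>} (\<lambda>v. sin v powr (2 * n + 1))))"
proof -
  define u where "u = deriv r"
  define u2 where "u2 = deriv (deriv r)"
  define m where "m = 2 * n + 2"
  define k where "k = c / b"
  have W: "in_W r" and eq: "\<And>x. x \<in> {0<..<pi} \<Longrightarrow> a * radius1 r x + b * radius2 r x + c = 0"
    using assms(3) unfolding linear_hopf_sphere_def by auto
  have hr: "\<And>x. (r has_real_derivative u x) (at x)" using W unfolding in_W_def u_def by auto
  have hu: "\<And>x. (u has_real_derivative u2 x) (at x)" using W unfolding in_W_def u_def u2_def by auto
  have cu2: "continuous_on UNIV u2" using W unfolding in_W_def u2_def by auto
  have u0: "u 0 = 0" "u pi = 0" using W unfolding in_W_def u_def by auto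
  have a_eq: "a = - (2 * n + 3) * b" using assms(1,2) by (simp add: field_simps)
  have R1: "\<And>x. radius1 r x = u x * cos x / sin x + r x" by (simp add: radius1_def u_def)
  have sdef: "\<And>x. astigmatism r x = u2 x - u x * cos x / sin x"
    by (simp add: astigmatism_def radius1_def radius2_def u_def u2_def)
  have s_r1: "astigmatism r x = m * radius1 r x - k" if x: "x \<in> {0<..<pi}" for x
  proof -
    have "b * (radius2 r x - (2 * n + 3) * radius1 r x + k) = 0"
      using eq[OF x] a_eq assms(1) unfolding k_def by (simp add: algebra_simps)
    then have "radius2 r x = (2 * n + 3) * radius1 r x - k" using assms(1) by simp
    then show ?thesis unfolding astigmatism_def m_def by (simp add: algebra_simps)
  qed
  define Q where "Q x = (m * radius1 r x - k) * sin x powr (- m)" for x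
  have dQ: "(Q has_real_derivative 0) (at x within {0<..<pi})" if x: "x \<in> {0<..<pi}" for x
  proof -
    have sp: "sin x > 0" using x by (auto intro: sin_gt_zero)
    have d1: "((\<lambda>y. m * radius1 r y - k) has_real_derivative m * ((cos x / sin x) * astigmatism r x)) (at x)"
      unfolding R1 sdef
      using DERIV_diff[OF DERIV_cmult[OF dR1[OF hr hu, of x]] DERIV_const, of m k] sp by simp
    have d2: "((\<lambda>y. sin y powr (- m)) has_real_derivative (- m) * sin x powr (- m - real 1) * cos x) (at x)"
      by (rule DERIV_fun_powr[OF DERIV_sin sp])
    have "(Q has_real_derivative m * ((cos x / sin x) * astigmatism r x) * sin x powr (- m)
        + ((- m) * sin x powr (- m - real 1) * cos x) * (m * radius1 r x - k)) (at x)"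
      unfolding Q_def[abs_def] by (rule DERIV_mult[OF d1 d2])
    moreover have "m * ((cos x / sin x) * astigmatism r x) * sin x powr (- m)
        + ((- m) * sin x powr (- m - real 1) * cos x) * (m * radius1 r x - k) = 0"
      using sp unfolding s_r1[OF x, symmetric] by (simp add: powr_diff field_simps)
    ultimately show ?thesis by (auto intro: has_field_derivative_at_within)
  qed
  obtain C0 where QC: "\<And>x. x \<in> {0<..<pi} \<Longrightarrow> Q x = C0"
    using has_field_derivative_zero_constant[OF convex_real_interval(8) dQ] by blast
  have sform: "astigmatism r x = C0 * sin x powr m" if x: "x \<in> {0<..<pi}" for x
  proof -
    have sp: "sin x > 0" using x by (auto intro: sin_gt_zero)
    have "astigmatism r x = Q x * sin x powr m"
      unfolding s_r1[OF x] Q_def using sp by (simp add: mult.assoc powr_add[symmetric])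
    then show ?thesis using QC[OF x] by simp
  qed

  have cos0: "cos 0 \<noteq> (0::real)" "cos pi \<noteq> (0::real)" by simp_all
  have lim0: "((\<lambda>y. u y / sin y) \<longlongrightarrow> u2 0) (at 0)"
    using quot_lim[OF hu DERIV_sin u0(1) sin_zero cos0(1)] by simp
  have limpi: "((\<lambda>y. u y / sin y) \<longlongrightarrow> - u2 pi) (at pi)"
    using quot_lim[OF hu DERIV_sin u0(2) sin_pi cos0(2)] by simp
  have icu2: "\<And>x. isCont u2 x" using cu2 by (simp add: continuous_on_eq_continuous_at)
  have slim: "((\<lambda>y. u2 y - u y / sin y * cos y) \<longlongrightarrow> u2 0 - u2 0 * cos 0) (at 0)"
    by (intro tendsto_intros lim0) (use icu2 in \<open>simp add: isCont_def\<close>)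
  have slim': "((\<lambda>y. u2 y - u y / sin y * cos y) \<longlongrightarrow> 0) (at_right 0)"
    using tendsto_within_subset[OF slim, of "{0<..}"] by simp
  have C0m: "C0 = 0 \<or> m > 0"
  proof (rule ccontr)
    assume "\<not> (C0 = 0 \<or> m > 0)"
    then have C0: "C0 \<noteq> 0" and mle: "m \<le> 0" by auto
    have ev1: "\<forall>\<^sub>F y in at_right 0. dist (u2 y - u y / sin y * cos y) 0 < \<bar>C0\<bar>"
      using slim' C0 unfolding tendsto_iff by auto
    have ev2: "\<forall>\<^sub>F y in at_right 0. y \<in> {0<..<pi}"
      by (rule eventually_at_rightI[of 0 pi]) auto
    have "\<forall>\<^sub>F y in at_right (0::real). False"
      using ev1 ev2
    proof eventually_elim
      case (elim y)
      have sp: "sin y > 0" using elim(2) by (auto intro: sin_gt_zero)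
      have "sin y powr (- m) \<le> 1" using mle sp sin_le_one[of y] by (intro powr_le1) auto
      moreover have "sin y powr (- m) > 0" using sp by simp
      ultimately have ge1: "sin y powr m \<ge> 1"
        using powr_minus[of "sin y" "-m"] by (simp add: one_le_inverse_iff)
      have "u2 y - u y / sin y * cos y = C0 * sin y powr m"
        using sform[OF elim(2)] sdef[of y] by simp
      then have "\<bar>C0\<bar> * sin y powr m < \<bar>C0\<bar>" using elim(1) sp by (simp add: abs_mult)
      with ge1 C0 show False
        by (metis abs_ge_zero mult_le_cancel_left1 not_le)
    qed
    then show False by (simp add: trivial_limit_at_right_real)
  qed
  define G where "G y = (if y = 0 then u2 0 else if y = pi then - u2 pi else u y / sin y)" for y
  have icu: "\<And>x. isCont u x" using hu by (rule DERIV_isCont)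
  have icr: "\<And>x. isCont r x" using hr by (rule DERIV_isCont)
  have Gcont: "continuous_on {0..pi} G"
  proof (rule continuous_at_imp_continuous_on, intro ballI)
    fix x :: real assume x: "x \<in> {0..pi}"
    consider "x = 0" | "x = pi" | "x \<in> {0<..<pi}" using x by fastforce
    then show "isCont G x"
    proof cases
      case 1
      have "\<forall>\<^sub>F y in at 0. u y / sin y = G y"
        unfolding eventually_at by (intro exI[of _ pi]) (auto simp: G_def dist_real_def)
      moreover have "G 0 = u2 0" by (simp add: G_def)
      ultimately show ?thesis
        using 1 Lim_transform_eventually[OF lim0] by (simp add: isCont_def)
    next
      case 2
      have "\<forall>\<^sub>F y in at pi. u y / sin y = G y"
        unfolding eventually_at by (intro exI[of _ pi]) (auto simp: G_def dist_real_def)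
      moreover have "G pi = - u2 pi" by (simp add: G_def)
      ultimately show ?thesis
        using 2 Lim_transform_eventually[OF limpi] by (simp add: isCont_def)
    next
      case 3
      have sp: "sin x \<noteq> 0" using 3 sin_gt_zero[of x] by auto
      have "\<forall>\<^sub>F y in nhds x. G y = u y / sin y"
        unfolding eventually_nhds_metric using 3
        by (intro exI[of _ "min x (pi - x)"]) (auto simp: G_def dist_real_def)
      moreover have "isCont (\<lambda>y. u y / sin y) x"
        using icu sp by (auto intro!: continuous_intros)
      ultimately show ?thesis using isCont_cong[of G "\<lambda>y. u y / sin y" x] by blast
    qed
  qed
  have dG: "(G has_real_derivative C0 * sin x powr (m - 1)) (at x)" if x: "x \<in> {0<..<pi}" for x
  proof -
    have sp: "sin x > 0" using x by (auto intro: sin_gt_zero)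
    have "((\<lambda>y. u y / sin y) has_real_derivative (u2 x * sin x - u x * cos x) / (sin x * sin x)) (at x)"
      using sp by (auto intro!: derivative_eq_intros hu)
    moreover have "(u2 x * sin x - u x * cos x) / (sin x * sin x) = C0 * sin x powr (m - 1)"
    proof -
      have "(u2 x * sin x - u x * cos x) / (sin x * sin x) = astigmatism r x / sin x"
        unfolding sdef using sp by (simp add: field_simps)
      also have "\<dots> = C0 * sin x powr (m - 1)" unfolding sform[OF x] using sp by (simp add: powr_diff)
      finally show ?thesis .
    qed
    ultimately have "((\<lambda>y. u y / sin y) has_real_derivative C0 * sin x powr (m - 1)) (at x)" by simp
    then show ?thesis
      by (rule has_field_derivative_transform_within_open[where S="{0<..<pi}"]) (use x in \<open>auto simp: G_def\<close>)
  qed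

  define P where "P y = C0 * sin y powr m / m" for y
  have Pcont: "continuous_on {0..pi} P"
  proof (cases "C0 = 0")
    case True
    then have "P = (\<lambda>_. 0)" by (simp add: P_def[abs_def])
    then show ?thesis by simp
  next
    case False
    then have mp: "m > 0" using C0m by simp
    have "continuous_on {0..pi} (\<lambda>y. sin y powr m)"
      by (rule continuous_on_powr') (use mp in \<open>auto intro!: continuous_intros sin_ge_zero\<close>)
    then have "continuous_on {0..pi} (\<lambda>y. (C0 / m) * sin y powr m)"
      by (rule continuous_on_mult_left)
    moreover have "P = (\<lambda>y. (C0 / m) * sin y powr m)" by (auto simp: P_def[abs_def])
    ultimately show ?thesis by simp
  qed
  have dP: "(P has_real_derivative C0 * sin x powr (m - 1) * cos x) (at x)" if x: "x \<in> {0<..<pi}" for x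
  proof (cases "C0 = 0")
    case True
    then have "P = (\<lambda>_. 0)" by (simp add: P_def[abs_def])
    then show ?thesis using True by simp
  next
    case False
    then have mp: "m > 0" using C0m by simp
    have sp: "sin x > 0" using x by (auto intro: sin_gt_zero)
    have "((\<lambda>y. C0 * sin y powr m / m) has_real_derivative C0 * (m * sin x powr (m - real 1) * cos x) / m) (at x)"
      by (rule DERIV_cdivide[OF DERIV_cmult[OF DERIV_fun_powr[OF DERIV_sin sp]]])
    then show ?thesis using mp unfolding P_def[abs_def] by (simp add: mult.assoc)
  qed
  define K where "K y = r y + cos y * G y - P y" for y
  have Kcont: "continuous_on {0..pi} K"
    unfolding K_def[abs_def]
    by (intro continuous_intros Gcont Pcont continuous_at_imp_continuous_on) (use icr in auto)
  have dK: "(K has_real_derivative 0) (at x within {0<..<pi})" if x: "x \<in> {0<..<pi}" for x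
  proof -
    have sp: "sin x > 0" using x by (auto intro: sin_gt_zero)
    have "(K has_real_derivative u x + (- sin x * G x + C0 * sin x powr (m - 1) * cos x) - C0 * sin x powr (m - 1) * cos x) (at x)"
      unfolding K_def[abs_def] by (rule DERIV_diff[OF DERIV_add[OF hr DERIV_mult[OF DERIV_cos dG[OF x]]] dP[OF x]])
    moreover have "G x = u x / sin x" using x by (auto simp: G_def)
    ultimately have "(K has_real_derivative 0) (at x)" using sp by simp
    then show ?thesis by (rule has_field_derivative_at_within)
  qed
  obtain cK where KC: "\<And>x. x \<in> {0<..<pi} \<Longrightarrow> K x = cK"
    using has_field_derivative_zero_constant[OF convex_real_interval(8) dK] by blast
  have Kall: "K x = cK" if "x \<in> {0..pi}" for x
    by (rule continuous_constant_on_closure[where S="{0<..<pi}"])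
       (use Kcont KC that in \<open>simp_all add: closure_greaterThanLessThan\<close>)
  have K0: "K 0 = r 0 + u2 0" by (simp add: K_def G_def P_def)
  have GF: "G t = u2 0 + C0 * integral {0..t} (\<lambda>v. sin v powr (2 * n + 1))" if t: "t \<in> {0..pi}" for t
  proof (cases "t = 0")
    case True
    then show ?thesis by (simp add: G_def)
  next
    case False
    then have tp: "t > 0" using t by simp
    have m1: "m - 1 = 2 * n + 1" by (simp add: m_def)
    have I: "((\<lambda>x. C0 * sin x powr (2 * n + 1)) has_integral G t - G 0) {0..t}"
    proof (rule fundamental_theorem_of_calculus_interior)
      show "0 \<le> t" using tp by simp
      show "continuous_on {0..t} G" using t by (intro continuous_on_subset[OF Gcont]) auto
      fix x assume "x \<in> {0<..<t}"
      then have "x \<in> {0<..<pi}" using t by auto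
      from dG[OF this] show "(G has_vector_derivative C0 * sin x powr (2 * n + 1)) (at x)"
        unfolding m1 has_real_derivative_iff_has_vector_derivative .
    qed
    show ?thesis
    proof (cases "C0 = 0")
      case True
      with I have "((\<lambda>x. 0) has_integral G t - G 0) {0..t}" by simp
      then have "G t - G 0 = 0" using has_integral_0 has_integral_unique by blast
      then show ?thesis using True by (simp add: G_def)
    next
      case False
      from has_integral_mult_right[OF I, of "1 / C0"] False
      have "((\<lambda>x. sin x powr (2 * n + 1)) has_integral (G t - G 0) / C0) {0..t}" by simp
      then have "integral {0..t} (\<lambda>x. sin x powr (2 * n + 1)) = (G t - G 0) / C0"
        by (rule integral_unique)
      then show ?thesis using False by (simp add: G_def)
    qed
  qed
  show ?thesis
  proof (intro exI conjI ballI)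
    fix t :: real assume t: "t \<in> {0<..<pi}"
    show "astigmatism r t = C0 * sin t powr (2 * n + 2)" using sform[OF t] by (simp add: m_def)
  next
    fix t :: real assume t: "t \<in> {0..pi}"
    have "r t = cK - cos t * G t + P t" using Kall[OF t] by (simp add: K_def)
    also have "cK = r 0 + u2 0" using Kall[of 0] K0 by simp
    finally show "r t = (- u2 0) * cos t + (r 0 + u2 0) + C0 *
        (sin t powr (2 * n + 2) / (2 * n + 2)
         - cos t * integral {0..t} (\<lambda>v. sin v powr (2 * n + 1)))"
      unfolding GF[OF t] P_def m_def by (simp add: algebra_simps)
  qed
qed
end
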